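(* Let $(Z,d)$ be an infinite compact metric space and $\psi:Z\to Z$ an expansive homeomorphism. Then there exist a compact zero-dimensional Hausdorff space $\mathcal P$, a homeomorphism $\sigma:\mathcal P\to\mathcal P$ and a continuous surjection $\pi:\mathcal P\to Z$ with $\pi\circ\sigma=\psi\circ\pi$, such that $\pi$ is injective on a dense $G_\delta$-subset of $\mathcal P$ (i.e. the set of $p\in\mathcal P$ with $\pi^{-1}(\pi(p))=\{p\}$ is a dense $G_\delta$), and such that $\mathcal P$ is a Cantor space whenever $Z$ has no isolated points.
   Context: A homeomorphism $\psi$ of a compact metric space $(Z,d)$ is expansive if there is $\varepsilon_Z>0$ such that $d(\psi^n(x),\psi^n(y))\le\varepsilon_Z$ for all $n\in\mathbb Z$ implies $x=y$. *)

theory Defs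
  imports "HOL-Analysis.Analysis"
begin

definition expansive :: "'a::metric_space set \<Rightarrow> ('a \<Rightarrow> 'a) \<Rightarrow> bool" where
  "expansive Z \<psi> \<longleftrightarrow>
     (\<exists>e>0. \<forall>x\<in>Z. \<forall>y\<in>Z.
        (\<forall>n::nat. dist ((\<psi> ^^ n) x) ((\<psi> ^^ n) y) \<le> e \<and>
                  dist ((inv_into Z \<psi> ^^ n) x) ((inv_into Z \<psi> ^^ n) y) \<le> e) \<longrightarrow> x = y)"

definition cantor_space :: "(nat \<Rightarrow> bool) topology" where
  "cantor_space = product_topology (\<lambda>_::nat. discrete_topology (UNIV::bool set)) UNIV"

end

theory Submission
  imports Defs
begin

lemma cont_to_bool:
  assumes "openin X {x\<in>topspace X. f x}" "openin X {x\<in>topspace X. \<not> f x}"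
  shows "continuous_map X (discrete_topology (UNIV::bool set)) f"
proof -
  have "openin X {x\<in>topspace X. f x \<in> U}" for U
  proof -
    have eq: "{x\<in>topspace X. f x \<in> U} = (if True \<in> U then {x\<in>topspace X. f x} else {})
        \<union> (if False \<in> U then {x\<in>topspace X. \<not> f x} else {})"
      by (cases "True \<in> U"; cases "False \<in> U"; auto; metis (full_types))
    show ?thesis unfolding eq using assms by auto
  qed
  then show ?thesis unfolding continuous_map_def by auto
qed

lemma zero_dim_sep:
  assumes cpt: "compact_space X" and clo: "\<And>n. closedin X (B n)" "\<And>n. openin X (B n)"
   and sep: "\<And>x y. x\<in>topspace X \<Longrightarrow> y\<in>topspace X \<Longrightarrow> x\<noteq>y \<Longrightarrow> \<exists>n. x\<in>B n \<and> y\<notin>B n"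
  shows "X dim_le 0"
  unfolding dimension_le_0_neighbourhood_base_of_clopen neighbourhood_base_of
proof (intro allI impI)
  fix W x assume a: "openin X W \<and> x \<in> W"
  define K where "K = topspace X - W"
  have "compactin X K" unfolding K_def using a cpt
    by (simp add: closedin_compact_space closedin_diff)
  have xt: "x \<in> topspace X" using a openin_subset by blast
  have "\<forall>y\<in>K. \<exists>n. x\<in>B n \<and> y\<notin>B n" using sep xt a unfolding K_def by blast
  then obtain N where N: "\<And>y. y\<in>K \<Longrightarrow> x \<in> B (N y) \<and> y \<notin> B (N y)" by metis
  have "K \<subseteq> \<Union>((\<lambda>y. topspace X - B (N y)) ` K)" using N unfolding K_def by auto
  moreover have "\<forall>U\<in>(\<lambda>y. topspace X - B (N y)) ` K. openin X U" using clo by auto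
  ultimately obtain \<F> where F: "finite \<F>" "\<F> \<subseteq> (\<lambda>y. topspace X - B (N y)) ` K" "K \<subseteq> \<Union>\<F>"
    using \<open>compactin X K\<close> unfolding compactin_def by metis
  then obtain F where F2: "finite F" "F \<subseteq> K" "\<F> = (\<lambda>y. topspace X - B (N y)) ` F"
    by (meson finite_subset_image)
  define V where "V = topspace X - \<Union>\<F>"
  have "openin X (\<Union>\<F>)" using F2 clo by (intro openin_Union) (auto intro!: openin_diff)
  moreover have "closedin X (\<Union>\<F>)" using F2 clo by (intro closedin_Union) auto
  ultimately have clV: "closedin X V" "openin X V" unfolding V_def by auto
  have "x \<in> V" unfolding V_def using F2 N xt by auto
  moreover have "V \<subseteq> W" unfolding V_def using F(3) K_def by auto
  ultimately show "\<exists>U V. openin X U \<and> (closedin X V \<and> openin X V) \<and> x \<in> U \<and> U \<subseteq> V \<and> V \<subseteq> W"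
    using clV by blast
qed

lemma Hausdorff_sep:
  assumes clo: "\<And>n. openin X (B n)" "\<And>n. closedin X (B n)"
   and sep: "\<And>x y. x\<in>topspace X \<Longrightarrow> y\<in>topspace X \<Longrightarrow> x\<noteq>y \<Longrightarrow> \<exists>n. x\<in>B n \<and> y\<notin>B n"
  shows "Hausdorff_space X"
  unfolding Hausdorff_space_def
proof (intro allI impI)
  fix x y assume "x \<in> topspace X \<and> y \<in> topspace X \<and> x \<noteq> y"
  then obtain n where "x\<in>B n" "y\<notin>B n" "y \<in> topspace X" using sep by blast
  then show "\<exists>U V. openin X U \<and> openin X V \<and> x \<in> U \<and> y \<in> V \<and> disjnt U V"
    using clo by (intro exI[of _ "B n"] exI[of _ "topspace X - B n"]) (auto simp: disjnt_def)
qed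

locale brw =
  fixes X :: "'x topology" and B :: "nat \<Rightarrow> 'x set"
  assumes cpt: "compact_space X"
  and clo: "\<And>n. closedin X (B n)" and opn: "\<And>n. openin X (B n)"
  and sep: "\<And>x y. x\<in>topspace X \<Longrightarrow> y\<in>topspace X \<Longrightarrow> x\<noteq>y \<Longrightarrow> \<exists>n. x\<in>B n \<and> y\<notin>B n"
  and perf: "\<And>x. x\<in>topspace X \<Longrightarrow> \<not> openin X {x}"
  and ne: "topspace X \<noteq> {}"
begin

definition idx :: "nat \<Rightarrow> 'x set \<Rightarrow> nat" where
  "idx n C = (if C \<inter> B n \<noteq> {} \<and> C - B n \<noteq> {} then n else (SOME m. C \<inter> B m \<noteq> {} \<and> C - B m \<noteq> {}))"

definition spl :: "nat \<Rightarrow> 'x set \<Rightarrow> bool \<Rightarrow> 'x set" where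
  "spl n C b = (if b then C \<inter> B (idx n C) else C - B (idx n C))"

lemma ex_split:
  assumes "openin X C" "C \<noteq> {}"
  shows "\<exists>m. C \<inter> B m \<noteq> {} \<and> C - B m \<noteq> {}"
proof -
  obtain x where x: "x \<in> C" using assms by auto
  have xt: "x \<in> topspace X" using x assms openin_subset by blast
  have "C \<noteq> {x}" using perf[OF xt] assms by auto
  then obtain y where y: "y \<in> C" "y \<noteq> x" using x by blast
  have yt: "y \<in> topspace X" using y assms openin_subset by blast
  obtain m where "x \<in> B m" "y \<notin> B m" using sep[OF xt yt] y by metis
  then show ?thesis using x y by blast
qed

lemma idx_ok:
  assumes "openin X C" "C \<noteq> {}"
  shows "C \<inter> B (idx n C) \<noteq> {} \<and> C - B (idx n C) \<noteq> {}"
proof (cases "C \<inter> B n \<noteq> {} \<and> C - B n \<noteq> {}")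
  case True
  then show ?thesis by (simp add: idx_def)
next
  case False
  then have "idx n C = (SOME m. C \<inter> B m \<noteq> {} \<and> C - B m \<noteq> {})"
    unfolding idx_def by (rule if_not_P)
  then show ?thesis using someI_ex[OF ex_split[OF assms]] by simp
qed

lemma idx_sep:
  assumes "openin X C" "C \<noteq> {}"
  shows "spl n C b \<subseteq> B n \<or> spl n C b \<inter> B n = {}"
proof (cases "C \<inter> B n \<noteq> {} \<and> C - B n \<noteq> {}")
  case True
  then have "idx n C = n" by (simp add: idx_def)
  then show ?thesis by (cases b) (auto simp: spl_def)
next
  case False
  have "spl n C b \<subseteq> C" by (auto simp: spl_def)
  with False show ?thesis by blast
qed

fun T :: "bool list \<Rightarrow> 'x set" where
  "T [] = topspace X"
| "T (b # w) = spl (length w) (T w) b"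

declare T.simps(2)[simp del]

lemma T_props: "T w \<noteq> {} \<and> openin X (T w) \<and> closedin X (T w)"
proof (induction w)
  case Nil
  then show ?case using ne by auto
next
  case (Cons b w)
  then have "T w \<inter> B (idx (length w) (T w)) \<noteq> {} \<and> T w - B (idx (length w) (T w)) \<noteq> {}"
    using idx_ok by blast
  then show ?case using Cons clo opn
    by (cases b) (auto simp: T.simps spl_def closedin_Int openin_Int openin_diff closedin_diff)
qed

lemma T_sub: "T (b # w) \<subseteq> T w"
  by (auto simp: T.simps spl_def)

lemma T_top: "T w \<subseteq> topspace X"
  using T_props openin_subset by blast

lemma T_cover: "T (True # w) \<union> T (False # w) = T w"
  by (auto simp: T.simps spl_def)

lemma T_disj2: "T (True # w) \<inter> T (False # w) = {}"
  by (auto simp: T.simps spl_def)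

lemma T_B: "T (b # w) \<subseteq> B (length w) \<or> T (b # w) \<inter> B (length w) = {}"
  using idx_sep T_props by (simp add: T.simps)

lemma T_desc: "n < length w \<Longrightarrow> T w \<subseteq> B n \<or> T w \<inter> B n = {}"
proof (induction w)
  case Nil
  then show ?case by simp
next
  case (Cons b w)
  show ?case
  proof (cases "n = length w")
    case True
    then show ?thesis using T_B by simp
  next
    case False
    then have "n < length w" using Cons by simp
    then show ?thesis using Cons.IH T_sub[of b w] by blast
  qed
qed

lemma T_disj: "length v = length w \<Longrightarrow> v \<noteq> w \<Longrightarrow> T v \<inter> T w = {}"
proof (induction v w rule: list_induct2)
  case Nil
  then show ?case by simp
next
  case (Cons a v b w)
  show ?case
  proof (cases "v = w")
    case True
    then have "a \<noteq> b" using Cons by simp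
    then show ?thesis using T_disj2[of w] True by (cases a) auto
  next
    case False
    then show ?thesis using Cons.IH T_sub[of a v] T_sub[of b w] by blast
  qed
qed

fun pref :: "(nat \<Rightarrow> bool) \<Rightarrow> nat \<Rightarrow> bool list" where
  "pref \<alpha> 0 = []"
| "pref \<alpha> (Suc n) = \<alpha> n # pref \<alpha> n"

lemma length_pref [simp]: "length (pref \<alpha> n) = n"
  by (induction n) auto

definition g :: "'x \<Rightarrow> nat \<Rightarrow> bool" where
  "g x n = (\<exists>w. length w = n \<and> x \<in> T (True # w))"

lemma g_false:
  assumes "x \<in> T (False # w)" shows "\<not> g x (length w)"
proof
  assume "g x (length w)"
  then obtain v where v: "length v = length w" "x \<in> T (True # v)" unfolding g_def by auto
  have "x \<in> T v" "x \<in> T w" using v assms T_sub by blast+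
  then have "v = w" using T_disj[OF v(1)] by blast
  then show False using v assms T_disj2 by blast
qed

lemma g_in: "x \<in> topspace X \<Longrightarrow> x \<in> T (pref (g x) n)"
proof (induction n)
  case 0
  then show ?case by simp
next
  case (Suc n)
  let ?w = "pref (g x) n"
  have "x \<in> T (True # ?w) \<or> x \<in> T (False # ?w)" using Suc T_cover by blast
  then show ?case
  proof
    assume "x \<in> T (True # ?w)"
    then have "g x n" using g_def length_pref by metis
    then show ?thesis using \<open>x \<in> T (True # ?w)\<close> by simp
  next
    assume "x \<in> T (False # ?w)"
    then have "\<not> g x n" using g_false by fastforce
    then show ?thesis using \<open>x \<in> T (False # ?w)\<close> by simp
  qed
qed

lemma g_unique:
  assumes "x \<in> topspace X" "\<And>n. x \<in> T (pref \<alpha> n)"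
  shows "g x = \<alpha>"
proof
  fix n
  have "x \<in> T (pref \<alpha> (Suc n))" "x \<in> T (pref (g x) (Suc n))" using assms g_in by blast+
  then have "pref \<alpha> (Suc n) = pref (g x) (Suc n)" using T_disj[of "pref \<alpha> (Suc n)" "pref (g x) (Suc n)"]
    by auto
  then show "g x n = \<alpha> n" by simp
qed

lemma g_inj: "inj_on g (topspace X)"
proof
  fix x y assume xy: "x \<in> topspace X" "y \<in> topspace X" "g x = g y"
  show "x = y"
  proof (rule ccontr)
    assume "x \<noteq> y"
    then obtain m where m: "x \<in> B m" "y \<notin> B m" using sep xy by blast
    have "T (pref (g x) (Suc m)) \<subseteq> B m \<or> T (pref (g x) (Suc m)) \<inter> B m = {}"
      by (rule T_desc) simp
    moreover have "x \<in> T (pref (g x) (Suc m))" "y \<in> T (pref (g x) (Suc m))"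
      using g_in xy by (metis)+
    ultimately show False using m by blast
  qed
qed

lemma g_surj: "g ` topspace X = UNIV"
proof -
  have "\<alpha> \<in> g ` topspace X" for \<alpha>
  proof -
    define C where "C n = T (pref \<alpha> n)" for n
    have "\<Inter> (range C) \<noteq> {}"
    proof (rule compact_space_imp_nest[OF cpt])
      show "closedin X (C n)" "C n \<noteq> {}" for n unfolding C_def using T_props by auto
      show "antimono_on UNIV C" unfolding antimono_iff_le_Suc C_def pref.simps by (intro allI T_sub)
    qed
    then obtain x where x: "\<And>n. x \<in> C n" by blast
    then have "x \<in> topspace X" using T_top unfolding C_def by blast
    then show ?thesis using g_unique x unfolding C_def by blast
  qed
  then show ?thesis by auto
qed

lemma g_cont: "continuous_map X cantor_space g"
  unfolding cantor_space_def continuous_map_componentwise_UNIV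
proof
  fix n
  have e1: "{x\<in>topspace X. g x n} = \<Union>{T (True # w) | w. length w = n}"
    using T_top unfolding g_def by blast
  have e2: "{x\<in>topspace X. \<not> g x n} = \<Union>{T (False # w) | w. length w = n}"
  proof (safe)
    fix x assume "x \<in> topspace X" "\<not> g x n"
    then have "x \<in> T (pref (g x) (Suc n))" using g_in by blast
    then have "x \<in> T (False # pref (g x) n)" using \<open>\<not> g x n\<close> by simp
    then show "x \<in> \<Union>{T (False # w) | w. length w = n}" by (intro UnionI[of "T (False # pref (g x) n)"]) auto
  next
    fix x w assume "x \<in> T (False # w)" "n = length w"
    then show "x \<in> topspace X" "g x (length w) \<Longrightarrow> False" using T_top g_false by blast+
  qed
  show "continuous_map X (discrete_topology UNIV) (\<lambda>x. g x n)"
    by (rule cont_to_bool) (unfold e1 e2, use T_props in auto)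
qed

lemma cantor: "X homeomorphic_space cantor_space"
proof -
  have "homeomorphic_map X cantor_space g"
  proof (rule continuous_imp_homeomorphic_map[OF g_cont cpt])
    show "Hausdorff_space cantor_space" unfolding cantor_space_def
      by (simp add: Hausdorff_space_product_topology)
    show "g ` topspace X = topspace cantor_space" unfolding cantor_space_def using g_surj by simp
    show "inj_on g (topspace X)" by (rule g_inj)
  qed
  then show ?thesis unfolding homeomorphic_space_def homeomorphic_map_maps by blast
qed

end


lemma hm_basic:
  assumes "homeomorphic_maps (top_of_set Z) (top_of_set Z) f g"
  shows "continuous_on Z f" "\<And>x. x \<in> Z \<Longrightarrow> f x \<in> Z" "\<And>x. x\<in>Z \<Longrightarrow> g (f x) = x"
    "\<And>y. y\<in>Z \<Longrightarrow> f (g y) = y" "continuous_on Z g" "\<And>x. x \<in> Z \<Longrightarrow> g x \<in> Z"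
  using assms unfolding homeomorphic_maps_def continuous_map_subtopology_eu by auto

lemma hm_mem:
  assumes "homeomorphic_maps (top_of_set Z) (top_of_set Z) f g" "U \<subseteq> Z" "z \<in> Z"
  shows "f z \<in> U \<longleftrightarrow> z \<in> g ` U"
proof
  assume "f z \<in> U"
  moreover have "z = g (f z)" using hm_basic(3)[OF assms(1) assms(3)] by simp
  ultimately show "z \<in> g ` U" by (rule image_eqI[rotated])
next
  assume "z \<in> g ` U" then obtain u where "u \<in> U" "z = g u" by auto
  then show "f z \<in> U" using hm_basic[OF assms(1)] assms(2) by auto
qed

lemma hm_sub:
  assumes "homeomorphic_maps (top_of_set Z) (top_of_set Z) f g" "A \<subseteq> Z"
  shows "f ` A \<subseteq> Z"
  using hm_basic[OF assms(1)] assms(2) by auto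

lemma hm_gf:
  assumes "homeomorphic_maps (top_of_set Z) (top_of_set Z) f g" "A \<subseteq> Z"
  shows "g ` f ` A = A"
proof -
  have "\<And>x. x\<in>A \<Longrightarrow> g (f x) = x" using hm_basic(3)[OF assms(1)] assms(2) by blast
  then show ?thesis by (simp add: image_image cong: image_cong)
qed

lemma hm_open:
  assumes "homeomorphic_maps (top_of_set Z) (top_of_set Z) f g" "openin (top_of_set Z) A"
  shows "openin (top_of_set Z) (f ` A)"
proof -
  have "homeomorphic_map (top_of_set Z) (top_of_set Z) f"
    using assms(1) homeomorphic_map_maps by blast
  then have "open_map (top_of_set Z) (top_of_set Z) f" by (rule homeomorphic_imp_open_map)
  then show ?thesis using assms(2) unfolding open_map_def by simp
qed

lemma hm_open_iter:
  assumes "homeomorphic_maps (top_of_set Z) (top_of_set Z) f g" "openin (top_of_set Z) A"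
  shows "openin (top_of_set Z) ((f ^^ n) ` A)"
proof (induction n)
  case 0
  then show ?case using assms by simp
next
  case (Suc n)
  have "(f ^^ Suc n) ` A = f ` ((f ^^ n) ` A)" by (simp only: funpow.simps image_comp)
  then show ?case using hm_open[OF assms(1) Suc] by simp
qed

lemma hm_clo:
  assumes hm: "homeomorphic_maps (top_of_set Z) (top_of_set Z) f g" and cl: "closed Z"
    and U: "U \<subseteq> Z" and z: "z \<in> Z"
  shows "f z \<in> closure U \<longleftrightarrow> z \<in> closure (g ` U)"
proof -
  have hm2: "homeomorphic_maps (top_of_set Z) (top_of_set Z) g f"
    using hm homeomorphic_maps_sym by blast
  have cU: "closure U \<subseteq> Z" using U cl closure_minimal by blast
  have gU: "g ` U \<subseteq> Z" using hm_sub[OF hm2 U] .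
  have cgU: "closure (g ` U) \<subseteq> Z" using gU cl closure_minimal by blast
  have i1: "g ` closure U \<subseteq> closure (g ` U)"
    by (rule image_closure_subset[OF continuous_on_subset[OF hm_basic(5)[OF hm] cU] closed_closure closure_subset])
  have i2: "f ` closure (g ` U) \<subseteq> closure (f ` g ` U)"
    by (rule image_closure_subset[OF continuous_on_subset[OF hm_basic(1)[OF hm] cgU] closed_closure closure_subset])
  have fg: "f ` g ` U = U" using hm_gf[OF hm2 U] .
  show ?thesis
  proof
    assume "f z \<in> closure U"
    then have "g (f z) \<in> g ` closure U" by (rule imageI)
    then have "g (f z) \<in> closure (g ` U)" using i1 by (rule subsetD[rotated])
    moreover have "g (f z) = z" using hm_basic(3)[OF hm z] .
    ultimately show "z \<in> closure (g ` U)" by simp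
  next
    assume "z \<in> closure (g ` U)"
    then have "f z \<in> f ` closure (g ` U)" by (rule imageI)
    then show "f z \<in> closure U" using i2 unfolding fg by (rule subsetD[rotated])
  qed
qed

lemma countable_sep_base:
  fixes Z :: "'a::metric_space set"
  assumes "compact Z"
  shows "\<exists>\<V>. countable \<V> \<and> (\<forall>V\<in>\<V>. openin (top_of_set Z) V) \<and>
           (\<forall>z\<in>Z. \<forall>w\<in>Z. z \<noteq> w \<longrightarrow> (\<exists>V\<in>\<V>. z \<in> V \<and> w \<notin> closure V))"
proof -
  have "\<forall>n. \<exists>k. finite k \<and> Z \<subseteq> (\<Union>x\<in>k. ball x (inverse (real (Suc n))))"
    using assms unfolding compact_eq_totally_bounded by auto
  then obtain K where K: "\<And>n. finite (K n)" "\<And>n. Z \<subseteq> (\<Union>x\<in>K n. ball x (inverse (real (Suc n))))"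
    by metis
  define \<V> where "\<V> = (\<Union>n. (\<lambda>x. Z \<inter> ball x (inverse (real (Suc n)))) ` K n)"
  have "countable \<V>" unfolding \<V>_def using K(1) by (intro countable_UN) (auto intro: countable_finite)
  moreover have "\<forall>V\<in>\<V>. openin (top_of_set Z) V" unfolding \<V>_def by (auto intro: openin_open_Int)
  moreover have "\<exists>V\<in>\<V>. z \<in> V \<and> w \<notin> closure V" if zw: "z \<in> Z" "w \<in> Z" "z \<noteq> w" for z w
  proof -
    have "dist z w > 0" using zw by simp
    then obtain n where n: "inverse (real (Suc n)) < dist z w / 2"
      using reals_Archimedean[of "dist z w / 2"] by auto
    let ?r = "inverse (real (Suc n))"
    obtain x where x: "x \<in> K n" "z \<in> ball x ?r" using K(2) zw by blast
    let ?V = "Z \<inter> ball x ?r"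
    have "closure ?V \<subseteq> cball x ?r"
      by (rule closure_minimal) auto
    moreover have "w \<notin> cball x ?r"
    proof
      assume "w \<in> cball x ?r"
      then have "dist x w \<le> ?r" by simp
      moreover have "dist x z < ?r" using x by simp
      moreover have "dist z w \<le> dist z x + dist x w" by (rule dist_triangle)
      moreover have "dist z x = dist x z" by (rule dist_commute)
      ultimately show False using n by linarith
    qed
    ultimately show ?thesis using x zw unfolding \<V>_def by blast
  qed
  ultimately show ?thesis by blast
qed

definition T0 :: "'a set set topology" where
  "T0 = pullback_topology UNIV (\<lambda>p U. U \<in> p) (product_topology (\<lambda>_. discrete_topology (UNIV::bool set)) UNIV)"

lemma T0_top [simp]: "topspace T0 = UNIV"
  unfolding T0_def by (simp add: topspace_pullback_topology)

lemma cont_T0: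
  assumes "\<And>U. openin X {x\<in>topspace X. U \<in> f x}" "\<And>U. openin X {x\<in>topspace X. U \<notin> f x}"
  shows "continuous_map X T0 f"
  unfolding T0_def
proof (rule continuous_map_pullback')
  show "continuous_map X (product_topology (\<lambda>_. discrete_topology UNIV) UNIV) ((\<lambda>p U. U \<in> p) \<circ> f)"
    unfolding continuous_map_componentwise_UNIV using assms by (auto intro!: cont_to_bool)
qed auto

lemma cyl_open: "openin T0 {p. U \<in> p}" "openin T0 {p. U \<notin> p}"
proof -
  have c: "continuous_map (product_topology (\<lambda>_. discrete_topology (UNIV::bool set)) UNIV) (discrete_topology UNIV) (\<lambda>x. x U)"
    by (rule continuous_map_product_projection) simp
  have "openin (product_topology (\<lambda>_. discrete_topology (UNIV::bool set)) UNIV) {x\<in>topspace (product_topology (\<lambda>_. discrete_topology (UNIV::bool set)) UNIV). x U \<in> V}" for V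
    by (rule openin_continuous_map_preimage[OF c]) simp
  then have o: "openin (product_topology (\<lambda>_. discrete_topology (UNIV::bool set)) UNIV) {x. x U \<in> V}" for V
    by simp
  have o1: "openin (product_topology (\<lambda>_. discrete_topology (UNIV::bool set)) UNIV) {x. x U}"
    using o[of "{True}"] by simp
  have o2: "openin (product_topology (\<lambda>_. discrete_topology (UNIV::bool set)) UNIV) {x. \<not> x U}"
    using o[of "{False}"] by simp
  show "openin T0 {p. U \<in> p}" unfolding T0_def openin_pullback_topology
    by (rule exI[of _ "{x. x U}"]) (use o1 in auto)
  show "openin T0 {p. U \<notin> p}" unfolding T0_def openin_pullback_topology
    by (rule exI[of _ "{x. \<not> x U}"]) (use o2 in auto)
qed

lemma cyl_closed: "closedin T0 {p. U \<in> p}" "closedin T0 {p. U \<notin> p}"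
proof -
  have "UNIV - {p. U \<in> p} = {p. U \<notin> p}" "UNIV - {p. U \<notin> p} = {p. U \<in> p}" by auto
  then show "closedin T0 {p. U \<in> p}" "closedin T0 {p. U \<notin> p}"
    unfolding closedin_def T0_top by (simp_all add: cyl_open)
qed

lemma T0_compact: "compact_space T0"
proof -
  let ?Pr = "product_topology (\<lambda>_. discrete_topology (UNIV::bool set)) (UNIV::'a set set)"
  have c: "continuous_map ?Pr (discrete_topology UNIV) (\<lambda>x. x U)" for U
    by (rule continuous_map_product_projection) simp
  have o: "openin ?Pr {x. x U \<in> V}" for U V
    using openin_continuous_map_preimage[OF c, of "V" U] by simp
  have "continuous_map ?Pr T0 Collect"
    by (rule cont_T0) (use o[of _ "{True}"] o[of _ "{False}"] in auto)
  moreover have "compact_space ?Pr" by (simp add: compact_space_product_topology compact_space_discrete_topology)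
  ultimately have "compactin T0 (Collect ` topspace ?Pr)"
    unfolding compact_space_def by (rule image_compactin[rotated])
  moreover have "p \<in> Collect ` topspace ?Pr" for p
    by (rule image_eqI[of _ _ "\<lambda>U. U \<in> p"]) auto
  then have "Collect ` topspace ?Pr = UNIV" by blast
  ultimately show ?thesis unfolding compact_space_def by simp
qed

lemma cyl_fin_open:
  assumes "finite F"
  shows "openin T0 {q. \<forall>U\<in>F. U \<in> q \<longleftrightarrow> U \<in> p}"
proof -
  have "{q. \<forall>U\<in>F. U \<in> q \<longleftrightarrow> U \<in> p} = UNIV \<inter> \<Inter>((\<lambda>U. if U \<in> p then {q. U \<in> q} else {q. U \<notin> q}) ` F)"
    by auto
  also have "openin T0 \<dots>"
  proof (rule openin_Int_Inter)
    show "openin T0 UNIV" using openin_topspace[of T0] by simp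
  qed (use assms cyl_open in auto)
  finally show ?thesis .
qed


locale mc =
  fixes Z :: "'a::metric_space set" and \<psi> \<psi>' :: "'a \<Rightarrow> 'a" and \<V> :: "'a set set"
  assumes cZ: "compact Z"
  and hm: "homeomorphic_maps (top_of_set Z) (top_of_set Z) \<psi> \<psi>'"
  and V_count: "countable \<V>"
  and V_open: "\<And>V. V \<in> \<V> \<Longrightarrow> openin (top_of_set Z) V"
  and V_sep: "\<And>z w. z \<in> Z \<Longrightarrow> w \<in> Z \<Longrightarrow> z \<noteq> w \<Longrightarrow> \<exists>V\<in>\<V>. z \<in> V \<and> w \<notin> closure V"
begin

lemma hm2: "homeomorphic_maps (top_of_set Z) (top_of_set Z) \<psi>' \<psi>"
  using hm homeomorphic_maps_sym by blast

lemma clZ: "closed Z" using cZ compact_imp_closed by blast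

definition UU :: "'a set set" where
  "UU = (\<lambda>(n, m, V). (\<psi> ^^ n) ` (\<psi>' ^^ m) ` V) ` (UNIV \<times> UNIV \<times> \<V>)"

lemma UU_count: "countable UU"
  unfolding UU_def using V_count by (intro countable_image countable_SIGMA) auto

lemma UU_mem: "U \<in> UU \<longleftrightarrow> (\<exists>n m V. V \<in> \<V> \<and> U = (\<psi> ^^ n) ` (\<psi>' ^^ m) ` V)"
proof
  assume "U \<in> UU"
  then obtain x where x: "x \<in> UNIV \<times> UNIV \<times> \<V>" "U = (\<lambda>(n, m, V). (\<psi> ^^ n) ` (\<psi>' ^^ m) ` V) x"
    unfolding UU_def by (rule imageE)
  obtain n m V where "x = (n, m, V)" by (cases x)
  then show "\<exists>n m V. V \<in> \<V> \<and> U = (\<psi> ^^ n) ` (\<psi>' ^^ m) ` V" using x by auto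
next
  assume "\<exists>n m V. V \<in> \<V> \<and> U = (\<psi> ^^ n) ` (\<psi>' ^^ m) ` V"
  then obtain n m V where "V \<in> \<V>" "U = (\<psi> ^^ n) ` (\<psi>' ^^ m) ` V" by blast
  then show "U \<in> UU" unfolding UU_def by (intro image_eqI[of _ _ "(n, m, V)"]) auto
qed

lemma UU_open: "U \<in> UU \<Longrightarrow> openin (top_of_set Z) U"
proof -
  assume "U \<in> UU"
  then obtain n m V where V: "V \<in> \<V>" "U = (\<psi> ^^ n) ` (\<psi>' ^^ m) ` V" unfolding UU_mem by blast
  show ?thesis unfolding V(2) by (intro hm_open_iter[OF hm] hm_open_iter[OF hm2] V_open V(1))
qed

lemma UU_sub: assumes "U \<in> UU" shows "U \<subseteq> Z"
  using openin_subset[OF UU_open[OF assms]] by simp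

lemma UU_psi: "U \<in> UU \<Longrightarrow> \<psi> ` U \<in> UU"
proof -
  assume "U \<in> UU"
  then obtain n m V where "V \<in> \<V>" "U = (\<psi> ^^ n) ` (\<psi>' ^^ m) ` V" unfolding UU_mem by blast
  then have "\<psi> ` U = (\<psi> ^^ Suc n) ` (\<psi>' ^^ m) ` V" by (simp only: funpow.simps image_comp o_assoc)
  then show ?thesis unfolding UU_mem using \<open>V \<in> \<V>\<close> by blast
qed

lemma UU_psi': "U \<in> UU \<Longrightarrow> \<psi>' ` U \<in> UU"
proof -
  assume "U \<in> UU"
  then obtain n m V where V: "V \<in> \<V>" "U = (\<psi> ^^ n) ` (\<psi>' ^^ m) ` V" unfolding UU_mem by blast
  show ?thesis
  proof (cases n)
    case 0
    then have "\<psi>' ` U = (\<psi> ^^ 0) ` (\<psi>' ^^ Suc m) ` V" using V by (simp only: funpow.simps image_comp o_assoc) simp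
    then show ?thesis unfolding UU_mem using V by blast
  next
    case (Suc k)
    have sub: "(\<psi> ^^ k) ` (\<psi>' ^^ m) ` V \<subseteq> Z"
      using openin_subset[OF hm_open_iter[OF hm hm_open_iter[OF hm2 V_open[OF V(1)]]]] by simp
    have "U = \<psi> ` ((\<psi> ^^ k) ` (\<psi>' ^^ m) ` V)" using V Suc by (simp only: funpow.simps image_comp o_assoc)
    then have "\<psi>' ` U = (\<psi> ^^ k) ` (\<psi>' ^^ m) ` V" using hm_gf[OF hm sub] by simp
    then show ?thesis unfolding UU_mem using V by blast
  qed
qed

lemma V_UU: "\<V> \<subseteq> UU"
proof
  fix V assume "V \<in> \<V>"
  moreover have "V = (\<psi> ^^ 0) ` (\<psi>' ^^ 0) ` V" by simp
  ultimately show "V \<in> UU" unfolding UU_mem by blast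
qed

lemma UU_sep: "z \<in> Z \<Longrightarrow> w \<in> Z \<Longrightarrow> z \<noteq> w \<Longrightarrow> \<exists>U\<in>UU. z \<in> U \<and> w \<notin> closure U"
  using V_sep V_UU by blast

definition c :: "'a \<Rightarrow> 'a set set" where
  "c z = {U \<in> UU. z \<in> U}"

definition Z0 :: "'a set" where
  "Z0 = {z \<in> Z. \<forall>U\<in>UU. z \<in> U \<or> z \<notin> closure U}"

lemma Z0_sub: "Z0 \<subseteq> Z" unfolding Z0_def by auto

lemma Z0_dense: "Z \<subseteq> closure Z0"
proof -
  define G where "G U = U \<union> (Z - closure U)" for U
  have "(top_of_set Z) closure_of \<Inter>(G ` UU) = topspace (top_of_set Z)"
  proof (rule Baire_category)
    have "compact_space (top_of_set Z)" using cZ by (simp add: compact_space_subtopology)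
    then have "locally_compact_space (top_of_set Z)" by (rule compact_imp_locally_compact_space)
    moreover have "regular_space (top_of_set Z)"
      by (intro metrizable_imp_regular_space metrizable_space_subtopology metrizable_space_euclidean)
    ultimately show "completely_metrizable_space (top_of_set Z) \<or>
      locally_compact_space (top_of_set Z) \<and> regular_space (top_of_set Z)" by blast
    show "countable (G ` UU)" using UU_count by blast
    fix T assume "T \<in> G ` UU"
    then obtain U where U: "U \<in> UU" "T = G U" by blast
    have "openin (top_of_set Z) (Z \<inter> - closure U)" by (rule openin_open_Int) auto
    moreover have "Z \<inter> - closure U = Z - closure U" by blast
    ultimately have "openin (top_of_set Z) (Z - closure U)" by simp
    then have oT: "openin (top_of_set Z) T" unfolding U G_def using UU_open[OF U(1)] by (intro openin_Un)
    have "Z \<subseteq> closure T"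
    proof
      fix z assume "z \<in> Z"
      show "z \<in> closure T"
      proof (cases "z \<in> closure U")
        case True
        moreover have "closure U \<subseteq> closure T" unfolding U G_def by (intro closure_mono) blast
        ultimately show ?thesis by blast
      next
        case False
        then have "z \<in> T" unfolding U G_def using \<open>z \<in> Z\<close> by blast
        then show ?thesis using closure_subset by blast
      qed
    qed
    moreover have "T \<subseteq> Z" unfolding U G_def using UU_sub[OF U(1)] by blast
    ultimately have "(top_of_set Z) closure_of T = topspace (top_of_set Z)"
      by (simp add: closure_of_subtopology Int_absorb1 closure_subset Int_absorb2)
    with oT show "openin (top_of_set Z) T \<and> (top_of_set Z) closure_of T = topspace (top_of_set Z)" by blast
  qed
  moreover have "Z \<inter> \<Inter>(G ` UU) = Z0" unfolding Z0_def G_def by blast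
  ultimately have "Z \<inter> closure Z0 = Z" by (simp add: closure_of_subtopology)
  then show ?thesis by blast
qed

definition S :: "'a set set set" where
  "S = T0 closure_of (c ` Z0)"

definition P :: "'a set set topology" where
  "P = subtopology T0 S"

lemma P_top [simp]: "topspace P = S"
  unfolding P_def S_def by simp

lemma S_closed: "closedin T0 S" unfolding S_def by simp

lemma P_compact: "compact_space P"
  unfolding P_def using closedin_compact_space[OF T0_compact S_closed] compact_space_subtopology by blast

lemma cZ0_S: "c ` Z0 \<subseteq> S"
  unfolding S_def by (rule closure_of_subset) simp

lemma P_closure: "P closure_of (c ` Z0) = S"
proof -
  have "S \<inter> c ` Z0 = c ` Z0" using cZ0_S by blast
  then show ?thesis unfolding P_def closure_of_subtopology by (simp add: S_def[symmetric])
qed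

lemma S_sub: "p \<in> S \<Longrightarrow> p \<subseteq> UU"
proof -
  assume p: "p \<in> S"
  have "closedin T0 (topspace T0 - \<Union>((\<lambda>U. {q. U \<in> q}) ` (- UU)))"
    by (intro closedin_diff closedin_topspace openin_Union) (auto simp: cyl_open)
  moreover have "c ` Z0 \<subseteq> topspace T0 - \<Union>((\<lambda>U. {q. U \<in> q}) ` (- UU))"
    unfolding c_def by auto
  ultimately have "S \<subseteq> topspace T0 - \<Union>((\<lambda>U. {q. U \<in> q}) ` (- UU))"
    unfolding S_def by (rule closure_of_minimal[rotated])
  then show "p \<subseteq> UU" using p by blast
qed

lemma P_open_cyl: "openin P (S \<inter> {p. U \<in> p})" "openin P (S \<inter> {p. U \<notin> p})"
  unfolding P_def openin_subtopology using cyl_open by blast+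

lemma P_closed_cyl: "closedin P (S \<inter> {p. U \<in> p})" "closedin P (S \<inter> {p. U \<notin> p})"
  unfolding P_def closedin_subtopology using cyl_closed by blast+


definition K :: "'a set set \<Rightarrow> 'a set" where
  "K p = {z \<in> Z. \<forall>U\<in>UU. (U \<in> p \<longrightarrow> z \<in> closure U) \<and> (U \<notin> p \<longrightarrow> z \<notin> U)}"

definition F :: "'a set \<Rightarrow> 'a set set \<Rightarrow> 'a set" where
  "F U p = (if U \<in> p then closure U else Z - U)"

lemma F_iff: "z \<in> Z \<Longrightarrow> z \<in> F U p \<longleftrightarrow> (U \<in> p \<longrightarrow> z \<in> closure U) \<and> (U \<notin> p \<longrightarrow> z \<notin> U)"
  unfolding F_def by simp

lemma K_eq: "K p = Z \<inter> \<Inter>((\<lambda>U. F U p) ` UU)"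
proof (rule set_eqI)
  fix z
  show "z \<in> K p \<longleftrightarrow> z \<in> Z \<inter> \<Inter>((\<lambda>U. F U p) ` UU)"
  proof (cases "z \<in> Z")
    case True
    then show ?thesis unfolding K_def using F_iff[OF True] by simp
  next
    case False
    then show ?thesis unfolding K_def by simp
  qed
qed

lemma F_closed: "U \<in> UU \<Longrightarrow> closed (F U p)"
proof -
  assume U: "U \<in> UU"
  have "closedin (top_of_set Z) (Z - U)"
    using closedin_diff[OF closedin_topspace UU_open[OF U]] by simp
  then have "closed (Z - U)" using closedin_closed_trans clZ by blast
  then show ?thesis unfolding F_def by simp
qed

lemma K_ne: assumes p: "p \<in> S" shows "K p \<noteq> {}"
proof -
  have "Z \<inter> \<Inter>((\<lambda>U. F U p) ` UU) \<noteq> {}"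
  proof (rule compact_imp_fip[OF cZ])
    show "closed T" if "T \<in> (\<lambda>U. F U p) ` UU" for T using that F_closed by blast
    fix F' assume F': "finite F'" "F' \<subseteq> (\<lambda>U. F U p) ` UU"
    then obtain U' where U': "finite U'" "U' \<subseteq> UU" "F' = (\<lambda>U. F U p) ` U'"
      using finite_subset_image by metis
    define N where "N = {q. \<forall>U\<in>U'. U \<in> q \<longleftrightarrow> U \<in> p}"
    have "openin T0 N" unfolding N_def using cyl_fin_open[OF U'(1)] .
    moreover have "p \<in> N" unfolding N_def by simp
    moreover have "\<forall>T. p \<in> T \<and> openin T0 T \<longrightarrow> (\<exists>y. y \<in> c ` Z0 \<and> y \<in> T)"
      using p unfolding S_def in_closure_of by simp
    ultimately obtain y where y: "y \<in> c ` Z0" "y \<in> N" by blast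
    from y(1) obtain z where z2: "y = c z" "z \<in> Z0" by (rule imageE)
    then have z: "z \<in> Z0" "y = c z" by auto
    have zZ: "z \<in> Z" using z Z0_sub by blast
    have "z \<in> F U p" if "U \<in> U'" for U
    proof -
      have "U \<in> UU" using that U' by blast
      have "U \<in> c z \<longleftrightarrow> U \<in> p" using y(2) that unfolding z(2) N_def by simp
      then have "z \<in> U \<longleftrightarrow> U \<in> p" using \<open>U \<in> UU\<close> unfolding c_def by simp
      then show ?thesis using F_iff[OF zZ] closure_subset by blast
    qed
    then have "z \<in> Z \<inter> \<Inter> F'" unfolding U'(3) using zZ by simp
    then show "Z \<inter> \<Inter> F' \<noteq> {}" by blast
  qed
  then show ?thesis unfolding K_eq .
qed

lemma K_uniq: assumes "z \<in> K p" "w \<in> K p" shows "z = w"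
proof (rule ccontr)
  assume "z \<noteq> w"
  moreover have "z \<in> Z" "w \<in> Z" using assms unfolding K_def by auto
  ultimately obtain U where U: "U \<in> UU" "z \<in> U" "w \<notin> closure U" using UU_sep by blast
  show False
  proof (cases "U \<in> p")
    case True
    then show False using assms(2) U unfolding K_def by blast
  next
    case False
    then show False using assms(1) U unfolding K_def by blast
  qed
qed

definition pi :: "'a set set \<Rightarrow> 'a" where
  "pi p = (THE z. z \<in> K p)"

lemma pi_eq: "z \<in> K p \<Longrightarrow> pi p = z"
  unfolding pi_def using K_uniq by blast

lemma pi_K: "p \<in> S \<Longrightarrow> pi p \<in> K p"
  using K_ne pi_eq by blast

lemma pi_Z: "p \<in> S \<Longrightarrow> pi p \<in> Z"
  using pi_K unfolding K_def by blast

lemma K_c: "z \<in> Z \<Longrightarrow> z \<in> K (c z)"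
  unfolding K_def c_def using closure_subset by auto

lemma pi_c: "z \<in> Z \<Longrightarrow> pi (c z) = z"
  using K_c pi_eq by blast

lemma pi_cont: "continuous_map P (top_of_set Z) pi"
  unfolding continuous_map_def
proof (intro conjI allI impI)
  show "pi \<in> topspace P \<rightarrow> topspace (top_of_set Z)" using pi_Z by auto
  fix V assume "openin (top_of_set Z) V"
  then obtain V' where V': "open V'" "V = Z \<inter> V'" unfolding openin_open by blast
  show "openin P {x \<in> topspace P. pi x \<in> V}"
  proof (subst openin_subopen, intro ballI)
    fix p assume "p \<in> {x \<in> topspace P. pi x \<in> V}"
    then have p: "p \<in> S" "pi p \<in> V" by auto
    have "\<exists>F'. finite F' \<and> F' \<subseteq> insert (- V') ((\<lambda>U. F U p) ` UU) \<and> Z \<inter> \<Inter>F' = {}"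
    proof (rule ccontr)
      assume na: "\<not> ?thesis"
      have "Z \<inter> \<Inter>(insert (- V') ((\<lambda>U. F U p) ` UU)) \<noteq> {}"
      proof (rule compact_imp_fip[OF cZ])
        show "closed T" if "T \<in> insert (- V') ((\<lambda>U. F U p) ` UU)" for T
          using that F_closed V'(1) by auto
        show "Z \<inter> \<Inter>F'' \<noteq> {}" if "finite F''" "F'' \<subseteq> insert (- V') ((\<lambda>U. F U p) ` UU)" for F''
          using na that by blast
      qed
      then obtain z where z: "z \<in> Z \<inter> \<Inter>((\<lambda>U. F U p) ` UU)" "z \<notin> V'" by auto
      then have "pi p = z" using pi_eq K_eq by simp
      moreover have "pi p \<in> V'" using p(2) V'(2) by simp
      ultimately show False using z(2) by simp
    qed
    then obtain F' where F': "finite F'" "F' \<subseteq> insert (- V') ((\<lambda>U. F U p) ` UU)" "Z \<inter> \<Inter>F' = {}"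
      by blast
    have "F' - {- V'} \<subseteq> (\<lambda>U. F U p) ` UU" "finite (F' - {- V'})" using F' by auto
    then obtain U' where U': "finite U'" "U' \<subseteq> UU" "F' - {- V'} = (\<lambda>U. F U p) ` U'"
      by (meson finite_subset_image)
    have sub: "Z \<inter> \<Inter>((\<lambda>U. F U p) ` U') \<subseteq> V'"
    proof
      fix z assume z: "z \<in> Z \<inter> \<Inter>((\<lambda>U. F U p) ` U')"
      show "z \<in> V'"
      proof (rule ccontr)
        assume "z \<notin> V'"
        then have "z \<in> Z \<inter> \<Inter>F'" using z U'(3) by blast
        then show False using F'(3) by blast
      qed
    qed
    define N where "N = {q. \<forall>U\<in>U'. U \<in> q \<longleftrightarrow> U \<in> p}"
    have "openin P (N \<inter> S)" unfolding P_def openin_subtopology N_def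
      using cyl_fin_open[OF U'(1)] by blast
    moreover have "p \<in> N \<inter> S" using p unfolding N_def by simp
    moreover have "N \<inter> S \<subseteq> {x \<in> topspace P. pi x \<in> V}"
    proof
      fix q assume q: "q \<in> N \<inter> S"
      have "pi q \<in> Z \<inter> \<Inter>((\<lambda>U. F U q) ` UU)" using pi_K q K_eq by blast
      then have "pi q \<in> Z \<inter> \<Inter>((\<lambda>U. F U q) ` U')" using U'(2) by blast
      moreover have "F U q = F U p" if "U \<in> U'" for U using q that unfolding N_def F_def by simp
      ultimately have "pi q \<in> Z \<inter> \<Inter>((\<lambda>U. F U p) ` U')" by simp
      then show "q \<in> {x \<in> topspace P. pi x \<in> V}" using sub q V'(2) by auto
    qed
    ultimately show "\<exists>T. openin P T \<and> p \<in> T \<and> T \<subseteq> {x \<in> topspace P. pi x \<in> V}" by blast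
  qed
qed

lemma compact_img: assumes "closedin P C" shows "compact (pi ` C)"
proof -
  have "compactin P C" using closedin_compact_space[OF P_compact assms] .
  then have "compactin (top_of_set Z) (pi ` C)" using image_compactin pi_cont by blast
  then show ?thesis by (simp add: compactin_subtopology)
qed

lemma pi_surj: "pi ` S = Z"
proof
  show "pi ` S \<subseteq> Z" using pi_Z by blast
  have "closedin P S" using closedin_topspace[of P] by simp
  then have "closed (pi ` S)" using compact_img compact_imp_closed by blast
  moreover have "Z0 \<subseteq> pi ` S"
  proof
    fix z assume "z \<in> Z0"
    then have "c z \<in> S" "pi (c z) = z" using cZ0_S pi_c Z0_sub by auto
    then show "z \<in> pi ` S" by (metis imageI)
  qed
  ultimately have "closure Z0 \<subseteq> pi ` S" by (rule closure_minimal[rotated])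
  then show "Z \<subseteq> pi ` S" using Z0_dense by blast
qed

end


context mc begin

definition sig :: "'a set set \<Rightarrow> 'a set set" where
  "sig p = {U \<in> UU. \<psi>' ` U \<in> p}"

definition sig' :: "'a set set \<Rightarrow> 'a set set" where
  "sig' p = {U \<in> UU. \<psi> ` U \<in> p}"

lemma P_cont_T0:
  assumes "\<And>U. f -` {p. U \<in> p} \<inter> S = (if U \<in> UU then S \<inter> {p. h U \<in> p} else {})"
  shows "continuous_map P T0 f"
proof (rule cont_T0)
  fix U
  have e1: "{x \<in> topspace P. U \<in> f x} = (if U \<in> UU then S \<inter> {p. h U \<in> p} else {})"
    using assms[of U] by auto
  have e2: "{x \<in> topspace P. U \<notin> f x} = (if U \<in> UU then S \<inter> {p. h U \<notin> p} else S)"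
    using assms[of U] by (auto split: if_splits)
  show "openin P {x \<in> topspace P. U \<in> f x}" unfolding e1 using P_open_cyl by simp
  show "openin P {x \<in> topspace P. U \<notin> f x}" unfolding e2 using P_open_cyl openin_topspace[of P] by simp
qed

lemma sig_cont0: "continuous_map P T0 sig"
  by (rule P_cont_T0[of _ "\<lambda>U. \<psi>' ` U"]) (auto simp: sig_def)

lemma sig'_cont0: "continuous_map P T0 sig'"
  by (rule P_cont_T0[of _ "\<lambda>U. \<psi> ` U"]) (auto simp: sig'_def)

lemma sig_c: assumes "z \<in> Z" shows "sig (c z) = c (\<psi> z)"
proof -
  have "U \<in> sig (c z) \<longleftrightarrow> U \<in> c (\<psi> z)" for U
  proof (cases "U \<in> UU")
    case True
    have "\<psi>' ` U \<in> UU" using UU_psi'[OF True] .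
    moreover have "\<psi> z \<in> U \<longleftrightarrow> z \<in> \<psi>' ` U" using hm_mem[OF hm UU_sub[OF True] assms] .
    ultimately show ?thesis unfolding sig_def c_def using True by simp
  next
    case False
    then show ?thesis unfolding sig_def c_def by simp
  qed
  then show ?thesis by blast
qed

lemma sig'_c: assumes "z \<in> Z" shows "sig' (c z) = c (\<psi>' z)"
proof -
  have "U \<in> sig' (c z) \<longleftrightarrow> U \<in> c (\<psi>' z)" for U
  proof (cases "U \<in> UU")
    case True
    have "\<psi> ` U \<in> UU" using UU_psi[OF True] .
    moreover have "\<psi>' z \<in> U \<longleftrightarrow> z \<in> \<psi> ` U" using hm_mem[OF hm2 UU_sub[OF True] assms] .
    ultimately show ?thesis unfolding sig'_def c_def using True by simp
  next
    case False
    then show ?thesis unfolding sig'_def c_def by simp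
  qed
  then show ?thesis by blast
qed

lemma psi_Z0: assumes "z \<in> Z0" shows "\<psi> z \<in> Z0"
proof -
  have z: "z \<in> Z" using assms Z0_sub by blast
  have "\<psi> z \<in> Z" using hm_basic(2)[OF hm z] .
  moreover have "\<psi> z \<in> U \<or> \<psi> z \<notin> closure U" if U: "U \<in> UU" for U
  proof -
    have "z \<in> \<psi>' ` U \<or> z \<notin> closure (\<psi>' ` U)" using assms UU_psi'[OF U] unfolding Z0_def by blast
    moreover have "\<psi> z \<in> U \<longleftrightarrow> z \<in> \<psi>' ` U" by (rule hm_mem[OF hm UU_sub[OF U] z])
    moreover have "\<psi> z \<in> closure U \<longleftrightarrow> z \<in> closure (\<psi>' ` U)" by (rule hm_clo[OF hm clZ UU_sub[OF U] z])
    ultimately show ?thesis by simp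
  qed
  ultimately show ?thesis unfolding Z0_def by blast
qed

lemma psi'_Z0: assumes "z \<in> Z0" shows "\<psi>' z \<in> Z0"
proof -
  have z: "z \<in> Z" using assms Z0_sub by blast
  have "\<psi>' z \<in> Z" using hm_basic(2)[OF hm2 z] .
  moreover have "\<psi>' z \<in> U \<or> \<psi>' z \<notin> closure U" if U: "U \<in> UU" for U
  proof -
    have "z \<in> \<psi> ` U \<or> z \<notin> closure (\<psi> ` U)" using assms UU_psi[OF U] unfolding Z0_def by blast
    moreover have "\<psi>' z \<in> U \<longleftrightarrow> z \<in> \<psi> ` U" by (rule hm_mem[OF hm2 UU_sub[OF U] z])
    moreover have "\<psi>' z \<in> closure U \<longleftrightarrow> z \<in> closure (\<psi> ` U)" by (rule hm_clo[OF hm2 clZ UU_sub[OF U] z])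
    ultimately show ?thesis by simp
  qed
  ultimately show ?thesis unfolding Z0_def by blast
qed

lemma sig_S: "sig ` S \<subseteq> S"
proof -
  have a: "sig ` (P closure_of (c ` Z0)) \<subseteq> T0 closure_of (sig ` c ` Z0)"
    by (rule continuous_map_image_closure_subset[OF sig_cont0])
  have "sig ` c ` Z0 \<subseteq> c ` Z0"
  proof
    fix y assume "y \<in> sig ` c ` Z0"
    then obtain z where z: "z \<in> Z0" "y = sig (c z)" by auto
    have zZ: "z \<in> Z" using z(1) Z0_sub by blast
    have "y = c (\<psi> z)" using z(2) sig_c[OF zZ] by simp
    then show "y \<in> c ` Z0" using psi_Z0[OF z(1)] by simp
  qed
  then have "T0 closure_of (sig ` c ` Z0) \<subseteq> T0 closure_of (c ` Z0)" by (rule closure_of_mono)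
  then show ?thesis using a unfolding P_closure S_def[symmetric] by (rule subset_trans[rotated])
qed

lemma sig'_S: "sig' ` S \<subseteq> S"
proof -
  have a: "sig' ` (P closure_of (c ` Z0)) \<subseteq> T0 closure_of (sig' ` c ` Z0)"
    by (rule continuous_map_image_closure_subset[OF sig'_cont0])
  have "sig' ` c ` Z0 \<subseteq> c ` Z0"
  proof
    fix y assume "y \<in> sig' ` c ` Z0"
    then obtain z where z: "z \<in> Z0" "y = sig' (c z)" by auto
    have zZ: "z \<in> Z" using z(1) Z0_sub by blast
    have "y = c (\<psi>' z)" using z(2) sig'_c[OF zZ] by simp
    then show "y \<in> c ` Z0" using psi'_Z0[OF z(1)] by simp
  qed
  then have "T0 closure_of (sig' ` c ` Z0) \<subseteq> T0 closure_of (c ` Z0)" by (rule closure_of_mono)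
  then show ?thesis using a unfolding P_closure S_def[symmetric] by (rule subset_trans[rotated])
qed

lemma sig_inv: assumes "p \<subseteq> UU" shows "sig' (sig p) = p" "sig (sig' p) = p"
proof -
  have "U \<in> sig' (sig p) \<longleftrightarrow> U \<in> p" for U
  proof (cases "U \<in> UU")
    case True
    then show ?thesis unfolding sig_def sig'_def using UU_psi[OF True] hm_gf[OF hm UU_sub[OF True]] by simp
  next
    case False
    then show ?thesis unfolding sig'_def using assms by blast
  qed
  then show "sig' (sig p) = p" by blast
  have "U \<in> sig (sig' p) \<longleftrightarrow> U \<in> p" for U
  proof (cases "U \<in> UU")
    case True
    then show ?thesis unfolding sig_def sig'_def using UU_psi'[OF True] hm_gf[OF hm2 UU_sub[OF True]] by simp
  next
    case False
    then show ?thesis unfolding sig_def using assms by blast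
  qed
  then show "sig (sig' p) = p" by blast
qed

lemma sig_homeo: "homeomorphic_map P P sig"
  unfolding homeomorphic_map_maps homeomorphic_maps_def
proof (intro exI[of _ sig'] conjI ballI)
  show "continuous_map P P sig" unfolding P_def
    by (rule continuous_map_into_subtopology) (use sig_cont0 sig_S in \<open>auto simp: P_def\<close>)
  show "continuous_map P P sig'" unfolding P_def
    by (rule continuous_map_into_subtopology) (use sig'_cont0 sig'_S in \<open>auto simp: P_def\<close>)
  show "sig' (sig x) = x" if "x \<in> topspace P" for x using sig_inv S_sub that by simp
  show "sig (sig' x) = x" if "x \<in> topspace P" for x using sig_inv S_sub that by simp
qed

lemma equiv: assumes p: "p \<in> S" shows "pi (sig p) = \<psi> (pi p)"
proof (rule pi_eq)
  have pK: "pi p \<in> K p" using pi_K[OF p] .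
  have pZ: "pi p \<in> Z" using pi_Z[OF p] .
  have "(U \<in> sig p \<longrightarrow> \<psi> (pi p) \<in> closure U) \<and> (U \<notin> sig p \<longrightarrow> \<psi> (pi p) \<notin> U)" if U: "U \<in> UU" for U
  proof -
    have U': "\<psi>' ` U \<in> UU" using UU_psi'[OF U] .
    have m: "U \<in> sig p \<longleftrightarrow> \<psi>' ` U \<in> p" unfolding sig_def using U by simp
    have k: "(\<psi>' ` U \<in> p \<longrightarrow> pi p \<in> closure (\<psi>' ` U)) \<and> (\<psi>' ` U \<notin> p \<longrightarrow> pi p \<notin> \<psi>' ` U)"
      using pK U' unfolding K_def by blast
    moreover have "\<psi> (pi p) \<in> U \<longleftrightarrow> pi p \<in> \<psi>' ` U" by (rule hm_mem[OF hm UU_sub[OF U] pZ])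
    moreover have "\<psi> (pi p) \<in> closure U \<longleftrightarrow> pi p \<in> closure (\<psi>' ` U)" by (rule hm_clo[OF hm clZ UU_sub[OF U] pZ])
    ultimately show ?thesis using m by simp
  qed
  moreover have "\<psi> (pi p) \<in> Z" using hm_basic(2)[OF hm pZ] .
  ultimately show "\<psi> (pi p) \<in> K (sig p)" unfolding K_def by blast
qed

end


context mc begin

definition W :: "'a set \<Rightarrow> 'a set set set" where
  "W U = {p \<in> S. \<forall>q\<in>S. pi q = pi p \<longrightarrow> (U \<in> q \<longleftrightarrow> U \<in> p)}"

lemma pre_open: assumes "closedin P C" shows "openin P {p \<in> S. pi p \<notin> pi ` C}"
proof -
  have "closed (pi ` C)" using compact_img[OF assms] compact_imp_closed by blast
  then have "openin (top_of_set Z) (Z \<inter> - (pi ` C))" by (intro openin_open_Int) auto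
  then have "openin P {p \<in> topspace P. pi p \<in> Z \<inter> - (pi ` C)}"
    by (rule openin_continuous_map_preimage[OF pi_cont])
  moreover have "{p \<in> topspace P. pi p \<in> Z \<inter> - (pi ` C)} = {p \<in> S. pi p \<notin> pi ` C}"
    using pi_Z by auto
  ultimately show ?thesis by simp
qed

lemma W_open: "openin P (W U)"
proof -
  define C1 where "C1 = S \<inter> {q. U \<notin> q}"
  define C2 where "C2 = S \<inter> {q. U \<in> q}"
  have o1: "openin P {p \<in> S. pi p \<notin> pi ` C1}" unfolding C1_def by (rule pre_open[OF P_closed_cyl(2)])
  have o2: "openin P {p \<in> S. pi p \<notin> pi ` C2}" unfolding C2_def by (rule pre_open[OF P_closed_cyl(1)])
  have "W U = ({p \<in> S. pi p \<notin> pi ` C1} \<inter> C2) \<union> ({p \<in> S. pi p \<notin> pi ` C2} \<inter> C1)"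
  proof (rule set_eqI)
    fix p
    show "p \<in> W U \<longleftrightarrow> p \<in> ({p \<in> S. pi p \<notin> pi ` C1} \<inter> C2) \<union> ({p \<in> S. pi p \<notin> pi ` C2} \<inter> C1)"
    proof (cases "p \<in> S")
      case False
      then show ?thesis unfolding W_def C1_def C2_def by simp
    next
      case True
      have "pi p \<in> pi ` C1 \<longleftrightarrow> (\<exists>q\<in>S. pi q = pi p \<and> U \<notin> q)"
      proof
        assume "pi p \<in> pi ` C1"
        then obtain q where "q \<in> C1" "pi p = pi q" by auto
        then show "\<exists>q\<in>S. pi q = pi p \<and> U \<notin> q" unfolding C1_def by auto
      next
        assume "\<exists>q\<in>S. pi q = pi p \<and> U \<notin> q"
        then obtain q where "q \<in> S" "pi q = pi p" "U \<notin> q" by blast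
        then show "pi p \<in> pi ` C1" unfolding C1_def by (intro image_eqI[of _ _ q]) auto
      qed
      moreover have "pi p \<in> pi ` C2 \<longleftrightarrow> (\<exists>q\<in>S. pi q = pi p \<and> U \<in> q)"
      proof
        assume "pi p \<in> pi ` C2"
        then obtain q where "q \<in> C2" "pi p = pi q" by auto
        then show "\<exists>q\<in>S. pi q = pi p \<and> U \<in> q" unfolding C2_def by auto
      next
        assume "\<exists>q\<in>S. pi q = pi p \<and> U \<in> q"
        then obtain q where "q \<in> S" "pi q = pi p" "U \<in> q" by blast
        then show "pi p \<in> pi ` C2" unfolding C2_def by (intro image_eqI[of _ _ q]) auto
      qed
      ultimately show ?thesis unfolding W_def C1_def C2_def using True by auto
    qed
  qed
  then show ?thesis using o1 o2 P_open_cyl unfolding C1_def C2_def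
    by (simp add: openin_Un openin_Int)
qed

definition DD :: "'a set set set" where
  "DD = {p \<in> S. {q \<in> S. pi q = pi p} = {p}}"

lemma DD_eq: assumes "UU \<noteq> {}" shows "DD = \<Inter>(W ` UU)"
proof (rule set_eqI)
  fix p
  show "p \<in> DD \<longleftrightarrow> p \<in> \<Inter>(W ` UU)"
  proof
    assume "p \<in> DD"
    then show "p \<in> \<Inter>(W ` UU)" unfolding DD_def W_def by blast
  next
    assume a: "p \<in> \<Inter>(W ` UU)"
    obtain U0 where "U0 \<in> UU" using assms by blast
    then have pS: "p \<in> S" using a unfolding W_def by blast
    have "q = p" if q: "q \<in> S" "pi q = pi p" for q
    proof -
      have "U \<in> q \<longleftrightarrow> U \<in> p" if "U \<in> UU" for U using a that q unfolding W_def by blast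
      then show "q = p" using S_sub[OF q(1)] S_sub[OF pS] by blast
    qed
    then show "p \<in> DD" unfolding DD_def using pS by blast
  qed
qed

lemma cZ0_DD: "c ` Z0 \<subseteq> DD"
proof
  fix y assume "y \<in> c ` Z0"
  then obtain z where z: "z \<in> Z0" "y = c z" by auto
  have zZ: "z \<in> Z" using z Z0_sub by blast
  have cS: "c z \<in> S" using cZ0_S z by blast
  have "q = c z" if q: "q \<in> S" "pi q = pi (c z)" for q
  proof -
    have pq: "pi q = z" using q(2) pi_c[OF zZ] by simp
    have "U \<in> q \<longleftrightarrow> U \<in> c z" if U: "U \<in> UU" for U
    proof
      assume "U \<in> q"
      then have "z \<in> closure U" using pi_K[OF q(1)] U unfolding pq K_def by blast
      then have "z \<in> U" using z(1) U unfolding Z0_def by blast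
      then show "U \<in> c z" unfolding c_def using U by blast
    next
      assume "U \<in> c z"
      then have "z \<in> U" unfolding c_def by blast
      then show "U \<in> q" using pi_K[OF q(1)] U unfolding pq K_def by blast
    qed
    moreover have "c z \<subseteq> UU" unfolding c_def by blast
    ultimately show ?thesis using S_sub[OF q(1)] by blast
  qed
  then have "{q \<in> S. pi q = pi (c z)} = {c z}" using cS by blast
  then show "y \<in> DD" unfolding DD_def using cS z(2) by simp
qed

lemma DD_dense: "P closure_of DD = S"
proof
  show "P closure_of DD \<subseteq> S" using closure_of_subset_topspace[of P DD] by simp
  have "P closure_of (c ` Z0) \<subseteq> P closure_of DD" by (rule closure_of_mono[OF cZ0_DD])
  then show "S \<subseteq> P closure_of DD" unfolding P_closure .
qed

lemma DD_gdelta: assumes "UU \<noteq> {}" shows "gdelta_in P DD"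
  unfolding DD_eq[OF assms]
  by (rule gdelta_in_Inter) (use UU_count assms W_open open_imp_gdelta_in in auto)

lemma c_inj: assumes "z \<in> Z" "w \<in> Z" "c z = c w" shows "z = w"
proof (rule ccontr)
  assume "z \<noteq> w"
  then obtain U where U: "U \<in> UU" "z \<in> U" "w \<notin> closure U" using UU_sep assms by blast
  then have "U \<in> c z" unfolding c_def by blast
  then have "w \<in> U" using assms(3) unfolding c_def by blast
  then show False using U closure_subset by blast
qed

lemma c_cont: "continuous_map (top_of_set Z0) T0 c"
proof (rule cont_T0)
  fix U
  show "openin (top_of_set Z0) {x \<in> topspace (top_of_set Z0). U \<in> c x}"
  proof (cases "U \<in> UU")
    case True
    obtain U' where U': "open U'" "U = Z \<inter> U'" using UU_open[OF True] unfolding openin_open by blast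
    have "{x \<in> topspace (top_of_set Z0). U \<in> c x} = Z0 \<inter> U'"
      unfolding c_def U'(2) using True U'(2) Z0_sub by auto
    then show ?thesis using U'(1) by (simp add: openin_open_Int)
  next
    case False
    then show ?thesis unfolding c_def by simp
  qed
  show "openin (top_of_set Z0) {x \<in> topspace (top_of_set Z0). U \<notin> c x}"
  proof (cases "U \<in> UU")
    case True
    have "{x \<in> topspace (top_of_set Z0). U \<notin> c x} = Z0 \<inter> - closure U"
      unfolding c_def Z0_def using True closure_subset by auto
    moreover have "openin (top_of_set Z0) (Z0 \<inter> - closure U)" by (rule openin_open_Int) auto
    ultimately show ?thesis by simp
  next
    case False
    then show ?thesis unfolding c_def by simp
  qed
qed

lemma no_iso: assumes perf: "\<forall>z\<in>Z. z islimpt Z" and p: "p \<in> S" shows "\<not> openin P {p}"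
proof
  assume op: "openin P {p}"
  have "p \<in> P closure_of (c ` Z0)" using p P_closure by simp
  then obtain y where "y \<in> c ` Z0" "y \<in> {p}" using op unfolding in_closure_of by blast
  then obtain z where z: "z \<in> Z0" "p = c z" by auto
  have zZ: "z \<in> Z" using z Z0_sub by blast
  obtain Ob where O: "openin T0 Ob" "{p} = Ob \<inter> S" using op unfolding P_def openin_subtopology by blast
  have "openin (top_of_set Z0) {x \<in> topspace (top_of_set Z0). c x \<in> Ob}"
    by (rule openin_continuous_map_preimage[OF c_cont O(1)])
  moreover have "{x \<in> topspace (top_of_set Z0). c x \<in> Ob} = {z}"
  proof
    show "{z} \<subseteq> {x \<in> topspace (top_of_set Z0). c x \<in> Ob}" using z O(2) by auto
    show "{x \<in> topspace (top_of_set Z0). c x \<in> Ob} \<subseteq> {z}"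
    proof
      fix x assume x: "x \<in> {x \<in> topspace (top_of_set Z0). c x \<in> Ob}"
      then have "c x \<in> S" using cZ0_S by auto
      then have "c x \<in> {p}" using x O(2) by auto
      then have "c x = c z" using z by simp
      then show "x \<in> {z}" using c_inj[OF _ zZ] x Z0_sub by auto
    qed
  qed
  ultimately have "openin (top_of_set Z0) {z}" by simp
  then obtain O' where O': "open O'" "{z} = Z0 \<inter> O'" unfolding openin_open by blast
  have "z \<in> O'" using O' by blast
  then obtain y where y: "y \<in> Z" "y \<in> O'" "y \<noteq> z" using perf zZ O'(1) unfolding islimpt_def by blast
  have "y \<in> closure Z0" using y Z0_dense by blast
  moreover have "open (O' - {z})" using O'(1) by (simp add: open_Diff)
  moreover have "y \<in> O' - {z}" using y by blast
  ultimately have "(O' - {z}) \<inter> Z0 \<noteq> {}" using open_Int_closure_eq_empty by blast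
  then show False using O'(2) by blast
qed

lemma S_ne: assumes "Z \<noteq> {}" shows "S \<noteq> {}"
proof -
  have "Z0 \<noteq> {}" using Z0_dense assms by auto
  then show ?thesis using cZ0_S by blast
qed

definition Bf :: "'a set \<times> bool \<Rightarrow> 'a set set set" where
  "Bf x = S \<inter> {p. (fst x \<in> p) = snd x}"

lemma Bf_open: "openin P (Bf x)" and Bf_closed: "closedin P (Bf x)"
proof -
  obtain U b where x: "x = (U, b)" by (cases x)
  show "openin P (Bf x)" unfolding x Bf_def using P_open_cyl by (cases b) auto
  show "closedin P (Bf x)" unfolding x Bf_def using P_closed_cyl by (cases b) auto
qed

lemma Bf_sep: assumes "p \<in> S" "q \<in> S" "p \<noteq> q" shows "\<exists>x\<in>UU \<times> UNIV. p \<in> Bf x \<and> q \<notin> Bf x"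
proof -
  have "\<exists>U\<in>UU. (U \<in> p) \<noteq> (U \<in> q)"
  proof (rule ccontr)
    assume "\<not> ?thesis"
    then have "p = q" using S_sub[OF assms(1)] S_sub[OF assms(2)] by blast
    then show False using assms(3) by simp
  qed
  then obtain U where "U \<in> UU" "(U \<in> p) \<noteq> (U \<in> q)" by blast
  then show ?thesis using assms unfolding Bf_def by (intro bexI[of _ "(U, U \<in> p)"]) auto
qed

end


theorem corollary2p24:
  fixes Z :: "'a::metric_space set" and \<psi> :: "'a \<Rightarrow> 'a"
  assumes "compact Z" and "infinite Z"
    and "homeomorphic_map (top_of_set Z) (top_of_set Z) \<psi>"
    and "expansive Z \<psi>"
  shows "\<exists>(P :: 'a set set topology) \<sigma> \<pi>.
           compact_space P \<and> Hausdorff_space P \<and> P dim_le 0 \<and>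
           homeomorphic_map P P \<sigma> \<and>
           continuous_map P (top_of_set Z) \<pi> \<and> \<pi> ` topspace P = Z \<and>
           (\<forall>p\<in>topspace P. \<pi> (\<sigma> p) = \<psi> (\<pi> p)) \<and>
           (let D = {p \<in> topspace P. {q \<in> topspace P. \<pi> q = \<pi> p} = {p}}
            in gdelta_in P D \<and> P closure_of D = topspace P) \<and>
           ((\<forall>z\<in>Z. z islimpt Z) \<longrightarrow> P homeomorphic_space cantor_space)"
proof -
  obtain \<psi>' where hm: "homeomorphic_maps (top_of_set Z) (top_of_set Z) \<psi> \<psi>'"
    using assms(3) homeomorphic_map_maps by blast
  from countable_sep_base[OF assms(1)] obtain \<V> where V0: "countable \<V> \<and> (\<forall>V\<in>\<V>. openin (top_of_set Z) V) \<and>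
    (\<forall>z\<in>Z. \<forall>w\<in>Z. z \<noteq> w \<longrightarrow> (\<exists>V\<in>\<V>. z \<in> V \<and> w \<notin> closure V))"
    by (rule exE)
  note V = conjunct1[OF V0] conjunct1[OF conjunct2[OF V0]] conjunct2[OF conjunct2[OF V0]]
  interpret M: mc Z \<psi> \<psi>' \<V>
    by unfold_locales (use assms(1) hm V in auto)
  obtain z where z: "z \<in> Z" using assms(2) infinite_imp_nonempty by blast
  have "infinite (Z - {z})" using assms(2) by simp
  then obtain w where w: "w \<in> Z - {z}" using infinite_imp_nonempty by blast
  obtain U where "U \<in> M.UU" using M.UU_sep[OF z, of w] w by blast
  then have UUne: "M.UU \<noteq> {}" by blast
  have Zne: "Z \<noteq> {}" using z by blast
  let ?I = "M.UU \<times> (UNIV :: bool set)"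
  have cI: "countable ?I" using M.UU_count by (intro countable_SIGMA) auto
  have neI: "?I \<noteq> {}" using UUne by simp
  define B where "B n = M.Bf (from_nat_into ?I n)" for n
  have rng: "range (from_nat_into ?I) = ?I" using range_from_nat_into[OF neI cI] .
  have sepB: "\<exists>n. x \<in> B n \<and> y \<notin> B n"
    if xyin: "x \<in> topspace M.P" "y \<in> topspace M.P" "x \<noteq> y" for x y
  proof -
    have xy: "x \<in> M.S" "y \<in> M.S" using xyin by simp_all
    obtain i where i: "i \<in> ?I" "x \<in> M.Bf i" "y \<notin> M.Bf i" using M.Bf_sep[OF xy xyin(3)] by blast
    then obtain n where "from_nat_into ?I n = i" using rng by (metis rangeE)
    then show ?thesis using i unfolding B_def by blast
  qed
  have Bo: "openin M.P (B n)" and Bc: "closedin M.P (B n)" for n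
    unfolding B_def using M.Bf_open M.Bf_closed by auto
  have Dset: "{p \<in> topspace M.P. {q \<in> topspace M.P. M.pi q = M.pi p} = {p}} = M.DD"
    unfolding M.DD_def by simp
  have cantor: "M.P homeomorphic_space cantor_space" if perf: "\<forall>z\<in>Z. z islimpt Z"
  proof -
    have "brw M.P B"
    proof
      show "compact_space M.P" by (rule M.P_compact)
      show "closedin M.P (B n)" "openin M.P (B n)" for n using Bo Bc by auto
      show "\<exists>n. x \<in> B n \<and> y \<notin> B n" if "x \<in> topspace M.P" "y \<in> topspace M.P" "x \<noteq> y" for x y
        using sepB that by blast
      show "\<not> openin M.P {x}" if "x \<in> topspace M.P" for x using M.no_iso[OF perf] that by simp
      show "topspace M.P \<noteq> {}" using M.S_ne[OF Zne] by simp
    qed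
    then show ?thesis by (rule brw.cantor)
  qed
  show ?thesis
  proof (intro exI[of _ M.P] exI[of _ M.sig] exI[of _ M.pi] conjI)
    show "compact_space M.P" by (rule M.P_compact)
    show "Hausdorff_space M.P" by (rule Hausdorff_sep[OF Bo Bc sepB])
    show "M.P dim_le 0" by (rule zero_dim_sep[OF M.P_compact Bc Bo sepB])
    show "homeomorphic_map M.P M.P M.sig" by (rule M.sig_homeo)
    show "continuous_map M.P (top_of_set Z) M.pi" by (rule M.pi_cont)
    show "M.pi ` topspace M.P = Z" using M.pi_surj by simp
    show "\<forall>p\<in>topspace M.P. M.pi (M.sig p) = \<psi> (M.pi p)" using M.equiv by simp
    show "let D = {p \<in> topspace M.P. {q \<in> topspace M.P. M.pi q = M.pi p} = {p}}
          in gdelta_in M.P D \<and> M.P closure_of D = topspace M.P"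
      unfolding Let_def Dset using M.DD_gdelta[OF UUne] M.DD_dense by simp
    show "(\<forall>z\<in>Z. z islimpt Z) \<longrightarrow> M.P homeomorphic_space cantor_space" using cantor by blast
  qed
qed

end
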